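(* Let $(X,T)$ be a topologically transitive topological dynamical system in which $X$ is a compact metric totally disconnected space, and let $0<\theta<1$. Then $\exp(2\pi i\theta)$ is a continuous eigenvalue of $T$ if and only if there exists a clopen set $U\subseteq X$ such that $1_U-\theta\cdot\mathbf 1$ is a real coboundary, i.e. $1_U-\theta\cdot \mathbf 1=F-F\circ T$ for some $F\in C(X,\mathbb R)$. Moreover, for such a clopen set $U$ one has $\mu(U)=\theta$ for every $T$-invariant Borel probability measure $\mu$ on $X$.
   Context: A topological dynamical system $(X,T)$ is a compact metric space $X$ with a homeomorphism $T$; it is topologically transitive if some point has a dense orbit. A complex number $\lambda$ is a continuous eigenvalue of $T$ if there is a continuous $f:X\to\mathbb S^1$ (equivalently a nonzero continuous $f:X\to\mathbb C$) with $f\circ T=\lambda f$. $1_U$ denotes the indicator function of $U$ and $\mathbf 1$ the constant function $1$. *)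

theory Defs
  imports "HOL-Analysis.Analysis" "HOL-Probability.Probability"
begin

definition totally_disconnected :: "'a::topological_space set \<Rightarrow> bool" where
  "totally_disconnected X \<longleftrightarrow> (\<forall>x\<in>X. connected_component_set X x = {x})"

definition orbit :: "'a set \<Rightarrow> ('a \<Rightarrow> 'a) \<Rightarrow> 'a \<Rightarrow> 'a set" where
  "orbit X T x = {(T ^^ n) x | n. True} \<union> {(inv_into X T ^^ n) x | n. True}"

definition top_transitive :: "'a::topological_space set \<Rightarrow> ('a \<Rightarrow> 'a) \<Rightarrow> bool" where
  "top_transitive X T \<longleftrightarrow> (\<exists>x\<in>X. closure (orbit X T x) = X)"

definition continuous_eigenvalue :: "'a::topological_space set \<Rightarrow> ('a \<Rightarrow> 'a) \<Rightarrow> complex \<Rightarrow> bool" where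
  "continuous_eigenvalue X T c \<longleftrightarrow>
     (\<exists>f :: 'a \<Rightarrow> complex. continuous_on X f \<and> (\<forall>x\<in>X. cmod (f x) = 1)
        \<and> (\<forall>x\<in>X. f (T x) = c * f x))"

definition clopen_in :: "'a::topological_space set \<Rightarrow> 'a set \<Rightarrow> bool" where
  "clopen_in X U \<longleftrightarrow> openin (top_of_set X) U \<and> closedin (top_of_set X) U"

definition real_coboundary :: "'a::topological_space set \<Rightarrow> ('a \<Rightarrow> 'a) \<Rightarrow> ('a \<Rightarrow> real) \<Rightarrow> bool" where
  "real_coboundary X T h \<longleftrightarrow>
     (\<exists>F :: 'a \<Rightarrow> real. continuous_on X F \<and> (\<forall>x\<in>X. h x = F x - F (T x)))"

definition invariant_borel_prob :: "'a::topological_space set \<Rightarrow> ('a \<Rightarrow> 'a) \<Rightarrow> 'a measure \<Rightarrow> bool" where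
  "invariant_borel_prob X T \<mu> \<longleftrightarrow>
     prob_space \<mu> \<and> sets \<mu> = sets (restrict_space borel X) \<and>
     T \<in> measurable \<mu> \<mu> \<and> distr \<mu> \<mu> T = \<mu>"

end

theory Submission imports Defs begin
lemma clopen_sep:
  fixes X :: "'a::metric_space set"
  assumes X: "compact X" and td: "totally_disconnected X"
    and K1: "closedin (top_of_set X) K1" and K2: "closedin (top_of_set X) K2" and dj: "K1 \<inter> K2 = {}"
  obtains A where "openin (top_of_set X) A" "openin (top_of_set X) (X - A)" "K1 \<subseteq> A" "A \<subseteq> X" "A \<inter> K2 = {}"
proof -
  have cs: "compact_space (top_of_set X)"
    using X by (simp add: compact_space_subtopology)
  have hs: "Hausdorff_space (top_of_set X)"
    using Hausdorff_space_subtopology Hausdorff_space_euclidean by blast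
  have K1c: "compactin (top_of_set X) K1"
    using K1 cs closedin_compact_space by blast
  have "separated_between (top_of_set X) K1 K2"
  proof (rule cut_wire_fence_theorem_gen[OF cs _ K1c K2])
    show "Hausdorff_space (top_of_set X) \<or> regular_space (top_of_set X) \<or> normal_space (top_of_set X)"
      using hs by blast
  next
    fix C assume "connectedin (top_of_set X) C"
    then have C: "C \<subseteq> X" "connected C" by (auto simp: connectedin_subtopology)
    show "disjnt C K1 \<or> disjnt C K2"
    proof (cases "C = {}")
      case False
      then obtain x where x: "x \<in> C" by blast
      have "C \<subseteq> connected_component_set X x"
        using connected_component_maximal[OF x C(2) C(1)] .
      also have "\<dots> = {x}" using td x C(1) unfolding totally_disconnected_def by blast
      finally have "C \<subseteq> {x}" .
      then show ?thesis using dj by (auto simp: disjnt_def)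
    qed simp
  qed
  then obtain U V where UV: "openin (top_of_set X) U" "openin (top_of_set X) V" "U \<union> V = X" "disjnt U V" "K1 \<subseteq> U" "K2 \<subseteq> V"
    unfolding separated_between_def by auto
  have "X - U = V" using UV(3,4) by (auto simp: disjnt_def)
  moreover have "U \<subseteq> X" using UV(3) by auto
  ultimately show ?thesis
    by (intro that[of U]) (use UV in \<open>auto simp: disjnt_def\<close>)
qed

lemma arg_small:
  fixes z :: complex and a :: real
  assumes "cmod z = 1" "Re z > cos a" "0 < a" "a \<le> pi"
  shows "\<bar>Arg z\<bar> < a"
proof -
  have "z \<noteq> 0" using assms by auto
  then have "cos (Arg z) = Re z" using cos_Arg assms(1) by simp
  then have "cos \<bar>Arg z\<bar> > cos a" using assms(2) by (simp add: abs_if)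
  moreover have "\<bar>Arg z\<bar> \<le> pi" using Arg_bounded[of z] by auto
  ultimately show ?thesis using cos_mono_less_eq[of a "\<bar>Arg z\<bar>"] assms by auto
qed

lemma arg2pi_big:
  fixes z :: complex and a :: real
  assumes "cmod z = 1" "Re z < cos a" "0 < a" "a \<le> pi"
  shows "a < Arg2pi z \<and> Arg2pi z < 2*pi - a"
proof -
  have c: "cos (Arg2pi z) = Re z" using cos_Arg2pi[of z] assms(1) by simp
  have b: "0 \<le> Arg2pi z" "Arg2pi z < 2*pi" using Arg2pi by auto
  show ?thesis
  proof (cases "Arg2pi z \<le> pi")
    case True
    then have "a < Arg2pi z" using cos_mono_less_eq[of "Arg2pi z" a] assms c b by auto
    then show ?thesis using True assms by auto
  next
    case False
    have "cos (2*pi - Arg2pi z) = Re z" using c by (simp add: cos_diff)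
    then have "a < 2*pi - Arg2pi z" using cos_mono_less_eq[of "2*pi - Arg2pi z" a] assms b False by auto
    then show ?thesis using False assms by auto
  qed
qed

lemma lift_lemma:
  fixes X :: "'a::metric_space set" and f :: "'a \<Rightarrow> complex"
  assumes X: "compact X" and td: "totally_disconnected X"
    and fc: "continuous_on X f" and f1: "\<forall>x\<in>X. cmod (f x) = 1"
    and e: "0 < e" "e \<le> 1/2"
  obtains g where "continuous_on X g" "\<forall>x\<in>X. exp (2 * pi * \<i> * complex_of_real (g x)) = f x"
    "\<forall>x\<in>X. - e < g x \<and> g x < 1 - e/2"
proof -
  define K1 where "K1 = X \<inter> (\<lambda>x. Re (f x)) -` {cos (pi*e)..}"
  define K2 where "K2 = X \<inter> (\<lambda>x. Re (f x)) -` {..cos (2*pi*e)}"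
  have rc: "continuous_on X (\<lambda>x. Re (f x))" using fc by (intro continuous_intros)
  have "closedin (top_of_set X) K1" unfolding K1_def
    by (rule continuous_closedin_preimage[OF rc]) auto
  moreover have "closedin (top_of_set X) K2" unfolding K2_def
    by (rule continuous_closedin_preimage[OF rc]) auto
  moreover have "cos (2*pi*e) < cos (pi*e)"
    using e by (subst cos_mono_less_eq) auto
  then have "K1 \<inter> K2 = {}" unfolding K1_def K2_def by auto
  ultimately obtain A where A: "openin (top_of_set X) A" "openin (top_of_set X) (X - A)" "K1 \<subseteq> A" "A \<subseteq> X" "A \<inter> K2 = {}"
    using clopen_sep[OF X td] by metis
  have inA: "Re (f x) > cos (2*pi*e)" if "x \<in> A" for x
    using that A(4,5) unfolding K2_def by auto
  have outA: "Re (f x) < cos (pi*e)" if "x \<in> X - A" for x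
    using that A(3) unfolding K1_def by auto
  have pi_e: "2*pi*e \<le> pi" using e by (simp add: mult.commute mult_left_le)
  define g where "g x = (if x \<in> A then Arg (f x) / (2*pi) else Arg2pi (f x) / (2*pi))" for x
  have cA: "continuous_on A (\<lambda>x. Arg (f x) / (2*pi))"
  proof (intro continuous_intros)
    show "continuous_on A f" using fc A(4) continuous_on_subset by blast
    fix x assume x: "x \<in> A"
    show "f x \<notin> \<real>\<^sub>\<le>\<^sub>0"
    proof
      assume "f x \<in> \<real>\<^sub>\<le>\<^sub>0"
      then have "Re (f x) \<le> 0" "Im (f x) = 0" by (auto simp: complex_nonpos_Reals_iff)
      moreover have "cmod (f x) = 1" using f1 x A(4) by auto
      ultimately have "Re (f x) = -1" by (simp add: cmod_def)
      then show False using inA[OF x] by (smt (verit) cos_ge_minus_one)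
    qed
  qed simp
  have cB: "continuous_on (X - A) (\<lambda>x. Arg2pi (f x) / (2*pi))"
  proof -
    have "continuous_on (X - A) (\<lambda>x. Arg2pi (f x))"
    proof (rule continuous_on_compose2[of "- \<real>\<^sub>\<ge>\<^sub>0" Arg2pi "X - A" f])
      show "continuous_on (- \<real>\<^sub>\<ge>\<^sub>0) Arg2pi"
        using continuous_at_Arg2pi by (simp add: continuous_at_imp_continuous_on)
      show "continuous_on (X - A) f" using fc continuous_on_subset by blast
      show "f ` (X - A) \<subseteq> - \<real>\<^sub>\<ge>\<^sub>0"
      proof
        fix z assume "z \<in> f ` (X - A)"
        then obtain x where x: "x \<in> X - A" "z = f x" by auto
        show "z \<in> - \<real>\<^sub>\<ge>\<^sub>0"
        proof
          assume "z \<in> \<real>\<^sub>\<ge>\<^sub>0"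
          then have "Re z \<ge> 0" "Im z = 0" by (auto simp: complex_nonneg_Reals_iff)
          moreover have "cmod z = 1" using f1 x by auto
          ultimately have "Re z = 1" by (simp add: cmod_def)
          then show False using outA[OF x(1)] x(2) by (smt (verit) cos_le_one)
        qed
      qed
    qed
    then show ?thesis by (intro continuous_intros) auto
  qed
  have "continuous_on (A \<union> (X - A)) g"
    unfolding g_def
    by (rule continuous_on_cases_local_open) (use A cA cB in \<open>auto simp: Un_absorb1\<close>)
  then have gc: "continuous_on X g" using A(4) by (simp add: Un_absorb1)
  have gexp: "\<forall>x\<in>X. exp (2 * pi * \<i> * complex_of_real (g x)) = f x"
  proof
    fix x assume x: "x \<in> X"
    have n: "cmod (f x) = 1" using f1 x by auto
    show "exp (2 * pi * \<i> * complex_of_real (g x)) = f x"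
    proof (cases "x \<in> A")
      case True
      have "f x \<noteq> 0" using n by auto
      then have "f x = exp (\<i> * Arg (f x))" using Arg_eq[of "f x"] n by simp
      then show ?thesis using True by (simp add: g_def field_simps)
    next
      case False
      have "exp (\<i> * complex_of_real (Arg2pi (f x))) = f x" using n complex_norm_eq_1_exp by blast
      then show ?thesis using False by (simp add: g_def field_simps)
    qed
  qed
  have gb: "\<forall>x\<in>X. - e < g x \<and> g x < 1 - e/2"
  proof
    fix x assume x: "x \<in> X"
    have n: "cmod (f x) = 1" using f1 x by auto
    show "- e < g x \<and> g x < 1 - e/2"
    proof (cases "x \<in> A")
      case True
      have "\<bar>Arg (f x)\<bar> < 2*pi*e" using arg_small[OF n inA[OF True]] e pi_e by auto
      then have "\<bar>g x\<bar> < e" using True by (simp add: g_def abs_divide field_simps)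
      then show ?thesis using e by auto
    next
      case False
      have "pi*e < Arg2pi (f x) \<and> Arg2pi (f x) < 2*pi - pi*e"
        using arg2pi_big[OF n outA] x False e pi_e by auto
      then have "e/2 < g x \<and> g x < 1 - e/2" using False by (simp add: g_def field_simps)
      then show ?thesis using e by auto
    qed
  qed
  show ?thesis using that gc gexp gb by blast
qed

lemma measure_part:
  fixes X :: "'a::metric_space set" and T :: "'a \<Rightarrow> 'a" and \<theta> :: real
  assumes X: "compact X" and Tc: "continuous_on X T" and TX: "T ` X \<subseteq> X"
    and U: "U \<subseteq> X" "clopen_in X U" and cob: "real_coboundary X T (\<lambda>x. indicator U x - \<theta>)"
    and inv: "invariant_borel_prob X T \<mu>"
  shows "measure \<mu> U = \<theta>"
proof -
  obtain F where Fc: "continuous_on X F" and Fe: "\<forall>x\<in>X. indicator U x - \<theta> = F x - F (T x)"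
    using cob unfolding real_coboundary_def by blast
  have ps: "prob_space \<mu>" and se: "sets \<mu> = sets (restrict_space borel X)"
    and Tm: "T \<in> measurable \<mu> \<mu>" and dT: "distr \<mu> \<mu> T = \<mu>"
    using inv unfolding invariant_borel_prob_def by auto
  interpret prob_space \<mu> by (rule ps)
  have sp: "space \<mu> = X"
    using sets_eq_imp_space_eq[OF se] by (simp add: space_restrict_space)
  have Fm: "F \<in> borel_measurable \<mu>"
    using borel_measurable_continuous_on_restrict[OF Fc] measurable_cong_sets[OF se refl] by blast
  have "compact (F ` X)" using compact_continuous_image[OF Fc X] .
  then obtain B where B: "\<forall>x\<in>X. norm (F x) \<le> B"
    using compact_imp_bounded bounded_iff by (metis imageI)
  have Fi: "integrable \<mu> F"
    by (rule integrable_const_bound[where B=B]) (use B sp Fm in auto)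
  have FTi: "integrable \<mu> (\<lambda>x. F (T x))"
    using integrable_distr_eq[OF Tm Fm] Fi dT by simp
  have FT: "integral\<^sup>L \<mu> (\<lambda>x. F (T x)) = integral\<^sup>L \<mu> F"
    using integral_distr[OF Tm Fm] dT by simp
  have "closed X" using X compact_imp_closed by blast
  then have "closed U" using U(2) closedin_closed_trans unfolding clopen_in_def by blast
  then have Us: "U \<in> sets \<mu>"
    using U(1) by (auto simp: se sets_restrict_space image_iff intro!: bexI[of _ U])
  have "integral\<^sup>L \<mu> (\<lambda>x. indicator U x - \<theta>) = integral\<^sup>L \<mu> (\<lambda>x. F x - F (T x))"
    by (rule Bochner_Integration.integral_cong[OF refl]) (use Fe sp in auto)
  also have "\<dots> = 0" using Bochner_Integration.integral_diff[OF Fi FTi] FT by simp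
  finally have "integral\<^sup>L \<mu> (\<lambda>x. indicator U x - \<theta>) = 0" .
  moreover have "integral\<^sup>L \<mu> (\<lambda>x. indicator U x - \<theta>) = measure \<mu> U - \<theta>"
  proof -
    have ii: "integrable \<mu> (\<lambda>x. indicator U x :: real)" using Us by (intro integrable_real_indicator) (auto simp: emeasure_eq_measure)
    have "integral\<^sup>L \<mu> (\<lambda>x. indicator U x - \<theta>) = integral\<^sup>L \<mu> (\<lambda>x. indicator U x) - integral\<^sup>L \<mu> (\<lambda>x. \<theta>)"
      by (rule Bochner_Integration.integral_diff[OF ii]) simp
    then show ?thesis using Us prob_space by simp
  qed
  ultimately show ?thesis by simp
qed

theorem mainTheorem1:
  fixes X :: "'a::metric_space set" and T :: "'a \<Rightarrow> 'a" and \<theta> :: real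
  assumes "compact X"
    and "\<exists>g. homeomorphism X X T g"
    and "top_transitive X T"
    and "totally_disconnected X"
    and "0 < \<theta>" and "\<theta> < 1"
  shows "(continuous_eigenvalue X T (exp (2 * pi * \<i> * complex_of_real \<theta>)) \<longleftrightarrow>
           (\<exists>U. U \<subseteq> X \<and> clopen_in X U \<and> real_coboundary X T (\<lambda>x. indicator U x - \<theta>)))
       \<and> (\<forall>U \<mu>. U \<subseteq> X \<and> clopen_in X U \<and> real_coboundary X T (\<lambda>x. indicator U x - \<theta>)
              \<and> invariant_borel_prob X T \<mu> \<longrightarrow> measure \<mu> U = \<theta>)"
proof -
  note X = assms(1) and td = assms(4) and th = assms(5,6)
  obtain h where "homeomorphism X X T h" using assms(2) by blast
  then have Tc: "continuous_on X T" and TX: "T ` X \<subseteq> X" unfolding homeomorphism_def by auto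
  let ?l = "exp (2 * pi * \<i> * complex_of_real \<theta>)"
  have "continuous_eigenvalue X T ?l \<Longrightarrow> \<exists>U. U \<subseteq> X \<and> clopen_in X U \<and> real_coboundary X T (\<lambda>x. indicator U x - \<theta>)"
  proof -
    assume "continuous_eigenvalue X T ?l"
    then obtain f where fc: "continuous_on X f" and f1: "\<forall>x\<in>X. cmod (f x) = 1"
      and fT: "\<forall>x\<in>X. f (T x) = ?l * f x" unfolding continuous_eigenvalue_def by blast
    define e where "e = min \<theta> (1 - \<theta>)"
    have e: "0 < e" "e \<le> 1/2" "e \<le> \<theta>" "e \<le> 1 - \<theta>" using th unfolding e_def by (auto simp: min_def)
    obtain g where gc: "continuous_on X g" and ge: "\<forall>x\<in>X. exp (2 * pi * \<i> * complex_of_real (g x)) = f x"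
      and gb: "\<forall>x\<in>X. - e < g x \<and> g x < 1 - e/2"
      using lift_lemma[OF X td fc f1 e(1,2)] by blast
    define k where "k x = g (T x) - g x - \<theta>" for x
    have kc: "continuous_on X k" unfolding k_def
      by (intro continuous_intros gc continuous_on_compose2[OF gc Tc TX])
    have k01: "k x = 0 \<or> k x = -1" if x: "x \<in> X" for x
    proof -
      have Tx: "T x \<in> X" using TX x by auto
      have "exp (2 * pi * \<i> * complex_of_real (g (T x))) = exp (2 * pi * \<i> * complex_of_real (\<theta> + g x))"
        using ge fT x Tx by (simp add: distrib_left exp_add)
      then have "exp (2 * pi * \<i> * complex_of_real (g (T x)) - 2 * pi * \<i> * complex_of_real (\<theta> + g x)) = 1"
        by (simp add: exp_diff)
      moreover have "2 * pi * \<i> * complex_of_real (g (T x)) - 2 * pi * \<i> * complex_of_real (\<theta> + g x)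
          = \<i> * complex_of_real (2 * pi * k x)"
        by (simp add: k_def algebra_simps)
      ultimately have "exp (\<i> * complex_of_real (2 * pi * k x)) = 1" by simp
      then obtain n :: int where "2 * pi * k x = of_int (2 * n) * pi"
        by (auto simp: exp_eq_1)
      then have "pi * k x = pi * of_int n" by simp
      then have kn: "k x = of_int n" using pi_gt_zero by simp
      have "-e < g (T x)" "g (T x) < 1 - e/2" "-e < g x" "g x < 1 - e/2" using gb x Tx by auto
      then have "-2 < k x" "k x < 1" using e unfolding k_def by linarith+
      then have "-2 < n" "n < 1" using kn by linarith+
      then have "n = 0 \<or> n = -1" by linarith
      then show ?thesis using kn by auto
    qed
    define U where "U = X \<inter> k -` {..< -1/2}"
    have U2: "U = X \<inter> k -` {.. -1/2}" unfolding U_def using k01 by fastforce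
    have "clopen_in X U" unfolding clopen_in_def
    proof
      show "openin (top_of_set X) U" unfolding U_def by (rule continuous_openin_preimage_gen[OF kc]) auto
      show "closedin (top_of_set X) U" unfolding U2 by (rule continuous_closedin_preimage[OF kc]) auto
    qed
    moreover have "real_coboundary X T (\<lambda>x. indicator U x - \<theta>)"
      unfolding real_coboundary_def
    proof (intro exI conjI ballI)
      show "continuous_on X g" by (rule gc)
      fix x assume x: "x \<in> X"
      show "indicator U x - \<theta> = g x - g (T x)"
        using k01[OF x] x by (auto simp: U_def k_def indicator_def)
    qed
    ultimately show ?thesis unfolding U_def by blast
  qed
  moreover have "\<exists>U. U \<subseteq> X \<and> clopen_in X U \<and> real_coboundary X T (\<lambda>x. indicator U x - \<theta>) \<Longrightarrow> continuous_eigenvalue X T ?l"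
  proof -
    assume "\<exists>U. U \<subseteq> X \<and> clopen_in X U \<and> real_coboundary X T (\<lambda>x. indicator U x - \<theta>)"
    then obtain U F where Fc: "continuous_on X F" and Fe: "\<forall>x\<in>X. indicator U x - \<theta> = F x - F (T x)"
      unfolding real_coboundary_def by blast
    show ?thesis unfolding continuous_eigenvalue_def
    proof (intro exI conjI ballI)
      show "continuous_on X (\<lambda>x. exp (2 * pi * \<i> * complex_of_real (F x)))"
        by (intro continuous_intros Fc)
      fix x assume x: "x \<in> X"
      show "cmod (exp (2 * pi * \<i> * complex_of_real (F x))) = 1" by (simp add: norm_exp_eq_Re)
      have FT: "F (T x) = F x + \<theta> - indicator U x" using Fe x by auto
      have "exp (2 * pi * \<i> * complex_of_real (F (T x))) =
            exp (2 * pi * \<i> * complex_of_real (F x)) * exp (2 * pi * \<i> * complex_of_real \<theta>) / exp (2 * pi * \<i> * complex_of_real (indicator U x))"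
        unfolding FT by (simp add: distrib_left right_diff_distrib exp_add exp_diff)
      also have "exp (2 * pi * \<i> * complex_of_real (indicator U x)) = 1"
        by (cases "x \<in> U") auto
      finally show "exp (2 * pi * \<i> * complex_of_real (F (T x))) = ?l * exp (2 * pi * \<i> * complex_of_real (F x))"
        by simp
    qed
  qed
  moreover have "\<forall>U \<mu>. U \<subseteq> X \<and> clopen_in X U \<and> real_coboundary X T (\<lambda>x. indicator U x - \<theta>)
              \<and> invariant_borel_prob X T \<mu> \<longrightarrow> measure \<mu> U = \<theta>"
    using measure_part[OF X Tc TX] by blast
  ultimately show ?thesis by blast
qed
end
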